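(* For each integer $N\ge 1$, let $A_N^{\mathrm{quant}}$ be the $N\times N$ real matrix with entries \[ (A_N^{\mathrm{quant}})_{m,n} = \frac{\sin \frac{\pi}{N}}{\sin \frac{\pi}{N}(m-n)} \quad (m\neq n), \qquad (A_N^{\mathrm{quant}})_{m,m}=0, \] $m,n=1,\dots,N$. Then the set of eigenvalues of $A_N^{\mathrm{quant}}$ is \[ \left\{ \pm 2i \left(\sin \tfrac{\pi}{N}\right)\left(k-\tfrac12\right) \;\middle|\; k=1,\dots,\tfrac{N}{2}\right\} \quad\text{if $N$ is even}, \] and \[ \{0\}\cup\left\{ \pm 2i \left(\sin \tfrac{\pi}{N}\right) k \;\middle|\; k=1,\dots,\tfrac{N-1}{2}\right\} \quad\text{if $N$ is odd}. \] *)

theory Defs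
  imports Complex_Main "Jordan_Normal_Form.Char_Poly"
begin

text \<open>The N x N matrix A_N^quant; rows/columns indexed 0..N-1 (shift of 1..N,
  which does not affect the differences m - n).\<close>
definition A_quant :: "nat \<Rightarrow> real mat" where
  "A_quant N = mat N N (\<lambda>(m, n). if m = n then 0
      else sin (pi / real N) / sin (pi / real N * (real m - real n)))"

end

theory Submission
  imports Defs
begin

lemma periodic_sum_shift:
  fixes F :: "real \<Rightarrow> 'a::comm_monoid_add"
  assumes per: "\<And>t. F (t + real N) = F t"
  shows "(\<Sum>n<N. F (real n - real m)) = (\<Sum>n<N. F (real n))"
proof (induction m)
  case 0 show ?case by simp
next
  case (Suc m)
  show ?case
  proof (cases N)
    case 0 then show ?thesis by simp
  next
    case (Suc M)
    have "(\<Sum>n<N. F (real n - real (Suc m))) = F (0 - real (Suc m)) + (\<Sum>n<M. F (real (Suc n) - real (Suc m)))"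
      unfolding Suc by (subst sum.lessThan_Suc_shift) simp
    also have "F (0 - real (Suc m)) = F (real M - real m)"
      using per[of "0 - real (Suc m)"] Suc by (simp add: algebra_simps)
    also have "(\<Sum>n<M. F (real (Suc n) - real (Suc m))) = (\<Sum>n<M. F (real n - real m))"
      by simp
    also have "F (real M - real m) + (\<Sum>n<M. F (real n - real m)) = (\<Sum>n<N. F (real n - real m))"
      unfolding Suc by (simp add: add.commute)
    finally show ?thesis using Suc.IH by simp
  qed
qed

lemma root_sum:
  assumes N: "N > 0"
  shows "(\<Sum>k<N. cis (2 * pi * real j / real N) ^ k) = (if N dvd j then of_nat N else 0)"
proof (cases "N dvd j")
  case True
  then obtain q where q: "j = N * q" by auto
  have "2 * pi * real j / real N = 2 * pi * real q" using N by (simp add: q)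
  then have "cis (2 * pi * real j / real N) = 1"
    by (simp add: cis_multiple_2pi)
  then show ?thesis using True by simp
next
  case False
  have ne: "cis (2 * pi * real j / real N) \<noteq> 1"
  proof
    assume "cis (2 * pi * real j / real N) = 1"
    then have "cos (2 * pi * real j / real N) = 1" by (metis cis.sel(1) one_complex.sel(1))
    then obtain z :: int where z: "2 * pi * real j / real N = real_of_int z * 2 * pi"
      by (auto simp: cos_one_2pi_int)
    then have "real j = real_of_int z * real N" using N by (simp add: field_simps)
    then have "int j = z * int N" by (metis of_int_eq_iff of_int_mult of_int_of_nat_eq)
    then have "int N dvd int j" by simp
    then show False using False by simp
  qed
  have "real N * (2 * pi * real j / real N) = 2 * pi * real j" using N by simp
  then have pw: "cis (2 * pi * real j / real N) ^ N = 1"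
    by (simp add: DeMoivre cis_multiple_2pi)
  show ?thesis using ne pw False by (simp add: sum_gp_strict)
qed

lemma cos_sum:
  assumes "0 < l" "l < N"
  shows "(\<Sum>d<N. cos (2 * pi * real l * real d / real N)) = 0"
proof -
  have "(\<Sum>d<N. cos (2 * pi * real l * real d / real N)) = Re (\<Sum>k<N. cis (2 * pi * real l / real N) ^ k)"
    by (simp add: Re_sum DeMoivre mult.commute)
  also have "\<dots> = 0" using assms by (subst root_sum) (auto dest: dvd_imp_le)
  finally show ?thesis .
qed

lemma sin_id:
  fixes y :: real
  assumes "sin y \<noteq> 0"
  shows "sin (real (2 * Suc k + 1) * y) / sin y = sin (real (2 * k + 1) * y) / sin y + 2 * cos (real (2 * Suc k) * y)"
proof -
  define a where "a = real (2 * Suc k) * y"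
  have 1: "real (2 * Suc k + 1) * y = a + y" unfolding a_def by (simp add: algebra_simps)
  have 2: "real (2 * k + 1) * y = a - y" unfolding a_def by (simp add: algebra_simps)
  show ?thesis unfolding 1 2 a_def[symmetric] using assms
    by (simp add: sin_add sin_diff field_simps)
qed

lemma sin_ratio_sum:
  assumes "k < N"
  shows "(\<Sum>d<N. sin (real (2*k+1) * (pi/real N) * real d) / sin (pi/real N * real d)) = real N - 1 - 2*real k"
proof -
  obtain M where NM: "N = Suc M" using assms by (cases N) auto
  define x where "x = pi / real N"
  have xpos: "x > 0" unfolding x_def using NM by simp
  have sinpos: "sin (x * real (Suc d)) > 0" if "d < M" for d
  proof (rule sin_gt_zero)
    show "0 < x * real (Suc d)" using xpos by simp
    have "x * real (Suc d) < x * real N" using xpos that NM by simp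
    also have "x * real N = pi" unfolding x_def using NM by simp
    finally show "x * real (Suc d) < pi" .
  qed
  have shift: "(\<Sum>d<N. sin (real (2*k+1) * x * real d) / sin (x * real d)) =
      (\<Sum>d<M. sin (real (2*k+1) * x * real (Suc d)) / sin (x * real (Suc d)))" for k
    unfolding NM by (subst sum.lessThan_Suc_shift) simp
  have main: "(\<Sum>d<M. sin (real (2*k+1) * x * real (Suc d)) / sin (x * real (Suc d))) = real M - 2 * real k"
    if "k < N" for k
    using that
  proof (induction k)
    case 0
    have "(\<Sum>d<M. sin (real (2*0+1) * x * real (Suc d)) / sin (x * real (Suc d))) = (\<Sum>d<M. 1)"
      using sinpos by (intro sum.cong) (auto simp: less_imp_neq[symmetric])
    then show ?case by simp
  next
    case (Suc k)
    have "(\<Sum>d<M. sin (real (2*Suc k+1) * x * real (Suc d)) / sin (x * real (Suc d))) =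
       (\<Sum>d<M. sin (real (2*k+1) * x * real (Suc d)) / sin (x * real (Suc d)) + 2 * cos (real (2 * Suc k) * (x * real (Suc d))))"
    proof (intro sum.cong refl)
      fix d assume "d \<in> {..<M}"
      then have "sin (x * real (Suc d)) \<noteq> 0" using sinpos by (metis lessThan_iff less_irrefl)
      from sin_id[OF this, of k] show "sin (real (2*Suc k+1) * x * real (Suc d)) / sin (x * real (Suc d)) =
        sin (real (2*k+1) * x * real (Suc d)) / sin (x * real (Suc d)) + 2 * cos (real (2 * Suc k) * (x * real (Suc d)))"
        by (simp add: mult.assoc)
    qed
    also have "\<dots> = (real M - 2 * real k) + 2 * (\<Sum>d<M. cos (real (2 * Suc k) * (x * real (Suc d))))"
      using Suc by (simp add: sum.distrib sum_distrib_left)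
    also have "(\<Sum>d<M. cos (real (2 * Suc k) * (x * real (Suc d)))) = -1"
    proof -
      have "(\<Sum>d<N. cos (2 * pi * real (Suc k) * real d / real N)) = 0"
        using Suc by (intro cos_sum) auto
      moreover have "(\<Sum>d<N. cos (2 * pi * real (Suc k) * real d / real N)) =
         1 + (\<Sum>d<M. cos (real (2 * Suc k) * (x * real (Suc d))))"
        unfolding NM x_def by (subst sum.lessThan_Suc_shift) (simp add: field_simps)
      ultimately show ?thesis by simp
    qed
    finally show ?case by simp
  qed
  show ?thesis using shift[of k] main[OF assms] NM unfolding x_def by simp
qed


definition FF :: "nat \<Rightarrow> nat \<Rightarrow> real \<Rightarrow> complex" where
  "FF k N t = cis (real (2*k+1) * (pi / real N) * t) / complex_of_real (sin (pi / real N * t))"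

lemma cis_odd_pi: "cis (u + real (2*k+1) * pi) = - cis u"
proof -
  have "cis (real (2*k+1) * pi) = -1"
    by (simp add: cis.ctr complex_eq_iff cos_npi sin_npi del: of_nat_Suc)
  then show ?thesis by (simp add: cis_mult[symmetric])
qed

lemma FF_per:
  assumes "N > 0"
  shows "FF k N (t + real N) = FF k N t"
proof -
  have 1: "real (2*k+1) * (pi / real N) * (t + real N) = real (2*k+1) * (pi / real N) * t + real (2*k+1) * pi"
    using assms by (simp add: field_simps)
  have 2: "pi / real N * (t + real N) = pi / real N * t + pi"
    using assms by (simp add: field_simps)
  show ?thesis unfolding FF_def 1 2 cis_odd_pi sin_periodic_pi by simp
qed

lemma FF_neg: "FF k N (- t) = - cnj (FF k N t)"
  unfolding FF_def by (simp add: cis_cnj)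

lemma Im_div_real: "Im (z / complex_of_real r) = Im z / r"
  by (cases "r = 0") (simp_all add: Im_divide power2_eq_square)

lemma FF_sum:
  assumes "k < N"
  shows "(\<Sum>d<N. FF k N (real d)) = \<i> * complex_of_real (real N - 1 - 2 * real k)"
proof -
  have N: "N > 0" using assms by simp
  let ?T = "(\<Sum>d<N. FF k N (real d))"
  have "(\<Sum>i<N. FF k N (real (N - Suc i) - real (N - 1))) = (\<Sum>n<N. FF k N (real n - real (N - 1)))"
    by (rule sum.nat_diff_reindex)
  also have "\<dots> = ?T" by (rule periodic_sum_shift) (rule FF_per[OF N])
  finally have "(\<Sum>i<N. FF k N (real (N - Suc i) - real (N - 1))) = ?T" .
  moreover have "(\<Sum>i<N. FF k N (real (N - Suc i) - real (N - 1))) = (\<Sum>i<N. FF k N (- real i))"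
    by (intro sum.cong refl) (auto simp: of_nat_diff)
  moreover have "(\<Sum>i<N. FF k N (- real i)) = - cnj ?T"
    by (simp add: FF_neg sum_negf)
  ultimately have "?T = - cnj ?T" by simp
  then have re: "Re ?T = 0" by (metis add.inverse_inverse cnj.sel(1) neg_equal_zero uminus_complex.sel(1))
  have "Im ?T = (\<Sum>d<N. sin (real (2*k+1) * (pi/real N) * real d) / sin (pi/real N * real d))"
    by (simp add: Im_sum FF_def Im_div_real)
  also have "\<dots> = real N - 1 - 2 * real k" by (rule sin_ratio_sum[OF assms])
  finally show ?thesis using re by (simp add: complex_eq_iff)
qed


definition cc :: "nat \<Rightarrow> nat \<Rightarrow> nat \<Rightarrow> complex" where
  "cc N m n = complex_of_real (sin (pi / real N) / sin (pi / real N * (real m - real n)))"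

definition ang :: "nat \<Rightarrow> nat \<Rightarrow> real" where
  "ang k N = real (2*k+1) * (pi / real N)"

lemma row_sum:
  assumes N: "N > 0" and m: "m < N"
  shows "(\<Sum>n<N. cc N m n * cis (ang k N * real n)) =
     - complex_of_real (sin (pi / real N)) * cis (ang k N * real m) * (\<Sum>d<N. FF k N (real d))"
proof -
  have "(\<Sum>n<N. cc N m n * cis (ang k N * real n)) =
     (\<Sum>n<N. - complex_of_real (sin (pi / real N)) * cis (ang k N * real m) * FF k N (real n - real m))"
  proof (intro sum.cong refl)
    fix n
    have c1: "cis (ang k N * real n) = cis (ang k N * real m) * cis (ang k N * (real n - real m))"
      by (simp add: cis_mult algebra_simps)
    have s1: "sin (pi / real N * (real m - real n)) = - sin (pi / real N * (real n - real m))"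
      by (metis minus_diff_eq sin_minus mult_minus_right)
    show "cc N m n * cis (ang k N * real n) =
       - complex_of_real (sin (pi / real N)) * cis (ang k N * real m) * FF k N (real n - real m)"
      unfolding cc_def FF_def s1 ang_def[symmetric] c1
      by (simp add: divide_inverse inverse_minus_eq)
  qed
  also have "\<dots> = - complex_of_real (sin (pi / real N)) * cis (ang k N * real m) * (\<Sum>n<N. FF k N (real n - real m))"
    by (simp add: sum_distrib_left)
  also have "(\<Sum>n<N. FF k N (real n - real m)) = (\<Sum>d<N. FF k N (real d))"
    by (rule periodic_sum_shift) (rule FF_per[OF N])
  finally show ?thesis .
qed

lemma cc_antisym: "cc N n m = - cc N m n"
proof -
  have s1: "sin (pi / real N * (real m - real n)) = - sin (pi / real N * (real n - real m))"
    by (metis minus_diff_eq sin_minus mult_minus_right)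
  show ?thesis unfolding cc_def s1 by simp
qed

abbreviation BB :: "nat \<Rightarrow> complex mat" where
  "BB N \<equiv> map_mat complex_of_real (A_quant N)"

lemma A_dims [simp]: "dim_row (A_quant N) = N" "dim_col (A_quant N) = N"
  by (simp_all add: A_quant_def)

lemma BB_dims [simp]: "dim_row (BB N) = N" "dim_col (BB N) = N"
  by (simp_all add: A_quant_def)

lemma BB_entry: "m < N \<Longrightarrow> n < N \<Longrightarrow> BB N $$ (m, n) = cc N m n"
  by (cases "m = n") (simp_all add: A_quant_def cc_def)

lemma A_entry: "m < N \<Longrightarrow> n < N \<Longrightarrow> complex_of_real (A_quant N $$ (m, n)) = cc N m n"
  by (cases "m = n") (simp_all add: A_quant_def cc_def)

lemma BB_mult:
  assumes "dim_vec v = N" "m < N"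
  shows "(BB N *\<^sub>v v) $ m = (\<Sum>n<N. cc N m n * v $ n)"
proof -
  have "(BB N *\<^sub>v v) $ m = row (BB N) m \<bullet> v" using assms by (intro index_mult_mat_vec) simp
  also have "\<dots> = (\<Sum>n<N. cc N m n * v $ n)"
    unfolding scalar_prod_def using assms
    by (intro sum.cong) (auto simp: A_entry)
  finally show ?thesis .
qed


lemma eigvec_u:
  assumes N: "N > 0" and k: "k < N"
  shows "eigenvector (BB N) (vec N (\<lambda>n. cis (ang k N * real n)))
           (- complex_of_real (sin (pi / real N)) * (\<i> * complex_of_real (real N - 1 - 2 * real k)))"
  unfolding eigenvector_def
proof (intro conjI)
  let ?u = "vec N (\<lambda>n. cis (ang k N * real n))"
  show "?u \<in> carrier_vec (dim_row (BB N))" by simp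
  show "?u \<noteq> 0\<^sub>v (dim_row (BB N))"
  proof
    assume "?u = 0\<^sub>v (dim_row (BB N))"
    then have "?u $ 0 = 0\<^sub>v N $ 0" by simp
    then show False using N by simp
  qed
  show "BB N *\<^sub>v ?u = (- complex_of_real (sin (pi / real N)) * (\<i> * complex_of_real (real N - 1 - 2 * real k))) \<cdot>\<^sub>v ?u"
  proof (rule eq_vecI)
    fix i assume i: "i < dim_vec ((- complex_of_real (sin (pi / real N)) * (\<i> * complex_of_real (real N - 1 - 2 * real k))) \<cdot>\<^sub>v ?u)"
    then have i': "i < N" by simp
    have "(BB N *\<^sub>v ?u) $ i = (\<Sum>n<N. cc N i n * cis (ang k N * real n))"
      using i' by (subst BB_mult) auto
    also have "\<dots> = - complex_of_real (sin (pi / real N)) * cis (ang k N * real i) * (\<i> * complex_of_real (real N - 1 - 2 * real k))"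
      using row_sum[OF N i', of k] FF_sum[OF k] by simp
    finally show "(BB N *\<^sub>v ?u) $ i = ((- complex_of_real (sin (pi / real N)) * (\<i> * complex_of_real (real N - 1 - 2 * real k))) \<cdot>\<^sub>v ?u) $ i"
      using i' by simp
  qed simp
qed

lemma dvd_shift: "(n::nat) < N \<Longrightarrow> m < N \<Longrightarrow> N dvd (n + N - m) \<longleftrightarrow> n = m"
proof
  assume a: "n < N" "m < N" "N dvd (n + N - m)"
  show "n = m"
  proof (rule ccontr)
    assume "n \<noteq> m"
    show False
    proof (cases "n < m")
      case True
      then have "0 < n + N - m" "n + N - m < N" using a by auto
      then show False using a(3) by (auto dest: nat_dvd_not_less)
    next
      case False
      then have "n + N - m = (n - m) + N" using a by auto
      then have "N dvd (n - m)" using a(3) by (metis dvd_add_left_iff dvd_refl)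
      moreover have "0 < n - m" "n - m < N" using False \<open>n \<noteq> m\<close> a by auto
      ultimately show False by (auto dest: nat_dvd_not_less)
    qed
  qed
qed auto

lemma completeness:
  assumes N: "N > 0" and v: "dim_vec v = N"
    and p: "\<And>k. k < N \<Longrightarrow> (\<Sum>n<N. cis (ang k N * real n) * v $ n) = 0"
  shows "v = 0\<^sub>v N"
proof (rule eq_vecI)
  fix m assume "m < dim_vec (0\<^sub>v N :: complex vec)"
  then have m: "m < N" by simp
  have "0 = (\<Sum>k<N. cis (2 * pi * real (N - m) * real k / real N) * (\<Sum>n<N. cis (ang k N * real n) * v $ n))"
    using p by simp
  also have "\<dots> = (\<Sum>n<N. v $ n * cis (pi * real n / real N) * (\<Sum>k<N. cis (2 * pi * real (n + N - m) / real N) ^ k))"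
  proof -
    have "(\<Sum>k<N. cis (2 * pi * real (N - m) * real k / real N) * (\<Sum>n<N. cis (ang k N * real n) * v $ n))
       = (\<Sum>k<N. \<Sum>n<N. v $ n * cis (pi * real n / real N) * cis (2 * pi * real (n + N - m) / real N) ^ k)"
    proof (intro sum.cong refl)
      fix k
      show "cis (2 * pi * real (N - m) * real k / real N) * (\<Sum>n<N. cis (ang k N * real n) * v $ n) =
          (\<Sum>n<N. v $ n * cis (pi * real n / real N) * cis (2 * pi * real (n + N - m) / real N) ^ k)"
        unfolding sum_distrib_left
      proof (intro sum.cong refl)
        fix n
        have e: "2 * pi * real (N - m) * real k / real N + ang k N * real n =
             pi * real n / real N + real k * (2 * pi * real (n + N - m) / real N)"
          using m unfolding ang_def by (simp add: of_nat_diff field_simps)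
        have "cis (2 * pi * real (N - m) * real k / real N) * (cis (ang k N * real n) * v $ n)
            = v $ n * cis (2 * pi * real (N - m) * real k / real N + ang k N * real n)"
          by (simp add: cis_mult)
        also have "\<dots> = v $ n * cis (pi * real n / real N) * cis (2 * pi * real (n + N - m) / real N) ^ k"
          unfolding e by (simp add: DeMoivre cis_mult)
        finally show "cis (2 * pi * real (N - m) * real k / real N) * (cis (ang k N * real n) * v $ n)
            = v $ n * cis (pi * real n / real N) * cis (2 * pi * real (n + N - m) / real N) ^ k" .
      qed
    qed
    also have "\<dots> = (\<Sum>n<N. v $ n * cis (pi * real n / real N) * (\<Sum>k<N. cis (2 * pi * real (n + N - m) / real N) ^ k))"
      by (subst sum.swap) (simp add: sum_distrib_left)
    finally show ?thesis .
  qed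
  also have "\<dots> = (\<Sum>n<N. if n = m then v $ m * cis (pi * real m / real N) * of_nat N else 0)"
    using m by (intro sum.cong refl, subst root_sum[OF N]) (auto simp: dvd_shift)
  also have "\<dots> = v $ m * cis (pi * real m / real N) * of_nat N"
    using m by simp
  finally have "v $ m * cis (pi * real m / real N) * of_nat N = 0" by simp
  then show "v $ m = 0\<^sub>v N $ m" using N m by simp
qed (simp add: v)


lemma eig_char:
  assumes N: "N > 0"
  shows "eigenvalue (BB N) z \<longleftrightarrow> (\<exists>j<N. z = \<i> * complex_of_real (sin (pi / real N) * (real N - 1 - 2 * real j)))"
proof
  assume "eigenvalue (BB N) z"
  then obtain v where ev: "eigenvector (BB N) v z" unfolding eigenvalue_def by blast
  then have v: "dim_vec v = N" and vnz: "v \<noteq> 0\<^sub>v N" and eq: "BB N *\<^sub>v v = z \<cdot>\<^sub>v v"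
    unfolding eigenvector_def by auto
  have row: "(\<Sum>n<N. cc N m n * v $ n) = z * v $ m" if "m < N" for m
  proof -
    have "(BB N *\<^sub>v v) $ m = (z \<cdot>\<^sub>v v) $ m" using eq by simp
    moreover have "(BB N *\<^sub>v v) $ m = (\<Sum>n<N. cc N m n * v $ n)" by (rule BB_mult[OF v that])
    ultimately show ?thesis using that v by simp
  qed
  obtain k where k: "k < N" and pk: "(\<Sum>n<N. cis (ang k N * real n) * v $ n) \<noteq> 0"
    using completeness[OF N v] vnz by blast
  define p where "p = (\<Sum>n<N. cis (ang k N * real n) * v $ n)"
  define s where "s = complex_of_real (sin (pi / real N))"
  define T where "T = (\<Sum>d<N. FF k N (real d))"
  have "z * p = (\<Sum>m<N. cis (ang k N * real m) * (z * v $ m))"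
    unfolding p_def by (simp add: sum_distrib_left algebra_simps)
  also have "\<dots> = (\<Sum>m<N. cis (ang k N * real m) * (\<Sum>n<N. cc N m n * v $ n))"
    by (intro sum.cong refl) (simp add: row)
  also have "\<dots> = (\<Sum>n<N. v $ n * (\<Sum>m<N. cc N m n * cis (ang k N * real m)))"
    by (simp add: sum_distrib_left algebra_simps) (rule sum.swap)
  also have "\<dots> = (\<Sum>n<N. v $ n * (- (\<Sum>m<N. cc N n m * cis (ang k N * real m))))"
  proof (intro sum.cong refl)
    fix n
    have "(\<Sum>m<N. cc N m n * cis (ang k N * real m)) = (\<Sum>m<N. - (cc N n m * cis (ang k N * real m)))"
      by (intro sum.cong refl) (subst cc_antisym, simp)
    then show "v $ n * (\<Sum>m<N. cc N m n * cis (ang k N * real m)) = v $ n * (- (\<Sum>m<N. cc N n m * cis (ang k N * real m)))"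
      by (simp add: sum_negf)
  qed
  also have "\<dots> = (\<Sum>n<N. v $ n * (s * cis (ang k N * real n) * T))"
    by (intro sum.cong refl) (simp add: row_sum[OF N] s_def T_def)
  also have "\<dots> = s * T * p"
    unfolding p_def by (simp add: sum_distrib_left algebra_simps)
  finally have "z * p = s * T * p" .
  then have "z = s * T" using pk unfolding p_def by simp
  then have "z = \<i> * complex_of_real (sin (pi / real N) * (real N - 1 - 2 * real k))"
    unfolding s_def T_def FF_sum[OF k] by simp
  then show "\<exists>j<N. z = \<i> * complex_of_real (sin (pi / real N) * (real N - 1 - 2 * real j))"
    using k by blast
next
  assume "\<exists>j<N. z = \<i> * complex_of_real (sin (pi / real N) * (real N - 1 - 2 * real j))"
  then obtain j where j: "j < N" and z: "z = \<i> * complex_of_real (sin (pi / real N) * (real N - 1 - 2 * real j))"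
    by blast
  define k where "k = N - 1 - j"
  have k: "k < N" using j N unfolding k_def by simp
  have "real N - 1 - 2 * real k = - (real N - 1 - 2 * real j)"
    using j unfolding k_def by (simp add: of_nat_diff)
  then have h: "complex_of_real (real N - 1 - 2 * real k) = - complex_of_real (real N - 1 - 2 * real j)"
    by (simp only: of_real_minus)
  have "- complex_of_real (sin (pi / real N)) * (\<i> * complex_of_real (real N - 1 - 2 * real k)) = z"
    unfolding z of_real_mult h by (simp only: mult_minus_right mult_minus_left minus_minus mult_ac)
  then show "eigenvalue (BB N) z"
    using eigvec_u[OF N k] unfolding eigenvalue_def by metis
qed


lemma cx1: "\<i> * complex_of_real r = 1 * 2 * \<i> * complex_of_real a" if "r = 2 * a"
  using that by simp
lemma cx2: "\<i> * complex_of_real r = -1 * 2 * \<i> * complex_of_real a" if "r = - (2 * a)"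
  using that by simp

theorem theorem4:
  fixes N :: nat
  assumes "N \<ge> 1"
  shows "{z. eigenvalue (map_mat complex_of_real (A_quant N)) z} =
    (if even N then
       {s * 2 * \<i> * complex_of_real (sin (pi / real N) * (real k - 1/2)) | s k.
          s \<in> {1, -1::complex} \<and> k \<in> {1..N div 2}}
     else
       {0} \<union> {s * 2 * \<i> * complex_of_real (sin (pi / real N) * real k) | s k.
          s \<in> {1, -1::complex} \<and> k \<in> {1..(N - 1) div 2}})"
proof -
  have N: "N > 0" using assms by simp
  define sn where "sn = sin (pi / real N)"
  have char: "{z. eigenvalue (map_mat complex_of_real (A_quant N)) z} =
     {z. \<exists>j<N. z = \<i> * complex_of_real (sn * (real N - 1 - 2 * real j))}"
    using eig_char[OF N] unfolding sn_def by auto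
  show ?thesis
  proof (cases "even N")
    case True
    then obtain q where q: "N = 2 * q" by auto
    have "{z. \<exists>j<N. z = \<i> * complex_of_real (sn * (real N - 1 - 2 * real j))} =
       {s * 2 * \<i> * complex_of_real (sn * (real k - 1/2)) | s k. s \<in> {1, -1::complex} \<and> k \<in> {1..N div 2}}"
    proof (rule Set.set_eqI, rule iffI)
      fix z assume "z \<in> {z. \<exists>j<N. z = \<i> * complex_of_real (sn * (real N - 1 - 2 * real j))}"
      then obtain j where j: "j < N" and z: "z = \<i> * complex_of_real (sn * (real N - 1 - 2 * real j))" by blast
      show "z \<in> {s * 2 * \<i> * complex_of_real (sn * (real k - 1/2)) | s k. s \<in> {1, -1::complex} \<and> k \<in> {1..N div 2}}"
      proof (cases "j < q")
        case True
        have "z = 1 * 2 * \<i> * complex_of_real (sn * (real (q - j) - 1/2))"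
          unfolding z by (rule cx1) (use True q in \<open>simp add: of_nat_diff algebra_simps\<close>)
        moreover have "q - j \<in> {1..N div 2}" using True q by auto
        ultimately show ?thesis by blast
      next
        case False
        have "z = -1 * 2 * \<i> * complex_of_real (sn * (real (j - q + 1) - 1/2))"
          unfolding z by (rule cx2) (use False q in \<open>simp add: of_nat_diff algebra_simps\<close>)
        moreover have "j - q + 1 \<in> {1..N div 2}" using False q j by auto
        ultimately show ?thesis by blast
      qed
    next
      fix z assume "z \<in> {s * 2 * \<i> * complex_of_real (sn * (real k - 1/2)) | s k. s \<in> {1, -1::complex} \<and> k \<in> {1..N div 2}}"
      then obtain s k where z: "z = s * 2 * \<i> * complex_of_real (sn * (real k - 1/2))"
        and s: "s \<in> {1, -1}" and k: "k \<in> {1..q}" using q by auto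
      show "z \<in> {z. \<exists>j<N. z = \<i> * complex_of_real (sn * (real N - 1 - 2 * real j))}"
      proof (cases "s = 1")
        case True
        have "\<i> * complex_of_real (sn * (real N - 1 - 2 * real (q - k))) = z"
          unfolding z True by (rule cx1) (use k q in \<open>simp add: of_nat_diff algebra_simps\<close>)
        moreover have "q - k < N" using k q by auto
        ultimately show ?thesis by blast
      next
        case False
        then have s': "s = -1" using s by auto
        have "\<i> * complex_of_real (sn * (real N - 1 - 2 * real (q + k - 1))) = z"
          unfolding z s' by (rule cx2) (use k q in \<open>simp add: of_nat_diff algebra_simps\<close>)
        moreover have "q + k - 1 < N" using k q by auto
        ultimately show ?thesis by blast
      qed
    qed
    then show ?thesis using True char unfolding sn_def by (simp only: if_True)
  next
    case False
    then obtain q where q: "N = 2 * q + 1" using oddE by blast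
    have "{z. \<exists>j<N. z = \<i> * complex_of_real (sn * (real N - 1 - 2 * real j))} =
       {0} \<union> {s * 2 * \<i> * complex_of_real (sn * real k) | s k. s \<in> {1, -1::complex} \<and> k \<in> {1..(N - 1) div 2}}"
    proof (rule Set.set_eqI, rule iffI)
      fix z assume "z \<in> {z. \<exists>j<N. z = \<i> * complex_of_real (sn * (real N - 1 - 2 * real j))}"
      then obtain j where j: "j < N" and z: "z = \<i> * complex_of_real (sn * (real N - 1 - 2 * real j))" by blast
      show "z \<in> {0} \<union> {s * 2 * \<i> * complex_of_real (sn * real k) | s k. s \<in> {1, -1::complex} \<and> k \<in> {1..(N - 1) div 2}}"
      proof (cases "j < q")
        case True
        have "z = 1 * 2 * \<i> * complex_of_real (sn * real (q - j))"
          unfolding z by (rule cx1) (use True q in \<open>simp add: of_nat_diff algebra_simps\<close>)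
        moreover have "q - j \<in> {1..(N - 1) div 2}" using True q by auto
        ultimately show ?thesis by blast
      next
        case False
        show ?thesis
        proof (cases "j = q")
          case True
          then have "z = 0" unfolding z q by simp
          then show ?thesis by simp
        next
          case False
          have "z = -1 * 2 * \<i> * complex_of_real (sn * real (j - q))"
            unfolding z by (rule cx2) (use False \<open>\<not> j < q\<close> q in \<open>simp add: of_nat_diff algebra_simps\<close>)
          moreover have "j - q \<in> {1..(N - 1) div 2}" using False \<open>\<not> j < q\<close> q j by auto
          ultimately show ?thesis by blast
        qed
      qed
    next
      fix z assume zin: "z \<in> {0} \<union> {s * 2 * \<i> * complex_of_real (sn * real k) | s k. s \<in> {1, -1::complex} \<and> k \<in> {1..(N - 1) div 2}}"
      show "z \<in> {z. \<exists>j<N. z = \<i> * complex_of_real (sn * (real N - 1 - 2 * real j))}"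
      proof (cases "z = 0")
        case True
        have "\<i> * complex_of_real (sn * (real N - 1 - 2 * real q)) = z" unfolding True q by simp
        moreover have "q < N" using q by simp
        ultimately show ?thesis by blast
      next
        case False
        then obtain s k where z: "z = s * 2 * \<i> * complex_of_real (sn * real k)"
          and s: "s \<in> {1, -1}" and k: "k \<in> {1..q}" using zin q by auto
        show ?thesis
        proof (cases "s = 1")
          case True
          have "\<i> * complex_of_real (sn * (real N - 1 - 2 * real (q - k))) = z"
            unfolding z True by (rule cx1) (use k q in \<open>simp add: of_nat_diff algebra_simps\<close>)
          moreover have "q - k < N" using k q by auto
          ultimately show ?thesis by blast
        next
          case False
          then have s': "s = -1" using s by auto
          have "\<i> * complex_of_real (sn * (real N - 1 - 2 * real (q + k))) = z"
            unfolding z s' by (rule cx2) (use k q in \<open>simp add: of_nat_diff algebra_simps\<close>)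
          moreover have "q + k < N" using k q by auto
          ultimately show ?thesis by blast
        qed
      qed
    qed
    then show ?thesis using False char unfolding sn_def by (simp only: if_False)
  qed
qed

end
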